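(* Let $K$ be a unital commutative ring, let $A$ be a $K$-algebra, and let $L\subseteq A$ be a Lie ideal such that $[A,L^2]\subseteq L$. Then \[ A[L,L^2]A\subseteq A[L,L^2]\subseteq L^2. \] Moreover, if $L_0\subseteq L$ is a subset and $m,n\in\mathbb{N}$ satisfy $[A,L_0]_1\subseteq\Sigma^nL_0$ and $[L_0^{\cdot 2},A]_1\subseteq\Sigma^mL_0$, then \[ A\cdot[L_0,L_0^{\cdot 2}]_1\subseteq \Sigma^{2n+m}L_0^{\cdot 2}\quad\text{and}\quad A\cdot[L_0,L_0^{\cdot 2}]_1\cdot A\subseteq \Sigma^{(2n+m)(1+3n)}L_0^{\cdot 2}. \]
   Context: $K$-algebras are associative and not necessarily unital. For $x,y\in A$, $[x,y]=xy-yx$. For subsets $X,Y\subseteq A$: $[X,Y]$ is the additive subgroup generated by all $[x,y]$ ($x\in X,y\in Y$); $XY$ is the additive subgroup generated by all $xy$, $X^2=XX$, and $XYZ=(XY)Z$; $[X,Y]_1=\{[x,y]: x\in X,y\in Y\}$; $X\cdot Y=\{xy:x\in X,y\in Y\}$, $X^{\cdot 2}=X\cdot X$, and $X\cdot Y\cdot Z$ is the set of triple products $xyz$; $\Sigma^n X=\{x_1+\dots+x_n: x_i\in X\}$. A Lie ideal of $A$ is a $K$-linear subspace $L$ with $[A,L]\subseteq L$. *)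

theory Defs
  imports Main "HOL.Modules"
begin

definition k_algebra :: "('k::comm_ring_1 \<Rightarrow> 'a::ring \<Rightarrow> 'a) \<Rightarrow> bool" where
  "k_algebra s \<longleftrightarrow> module s \<and>
     (\<forall>k x y. s k (x * y) = s k x * y \<and> s k (x * y) = x * s k y)"

definition comm :: "'a::ring \<Rightarrow> 'a \<Rightarrow> 'a" where
  "comm x y = x * y - y * x"

inductive_set add_gen :: "'a::ab_group_add set \<Rightarrow> 'a set" for X where
  zero: "0 \<in> add_gen X"
| gen: "x \<in> X \<Longrightarrow> x \<in> add_gen X"
| add: "x \<in> add_gen X \<Longrightarrow> y \<in> add_gen X \<Longrightarrow> x + y \<in> add_gen X"
| neg: "x \<in> add_gen X \<Longrightarrow> - x \<in> add_gen X"

definition set_comm :: "'a::ring set \<Rightarrow> 'a set \<Rightarrow> 'a set" where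
  "set_comm X Y = add_gen {comm x y | x y. x \<in> X \<and> y \<in> Y}"

text \<open>XY: additive subgroup generated by all xy; X^2 = XX, XYZ = (XY)Z.\<close>
definition set_prod :: "'a::ring set \<Rightarrow> 'a set \<Rightarrow> 'a set" where
  "set_prod X Y = add_gen {x * y | x y. x \<in> X \<and> y \<in> Y}"

definition comm1 :: "'a::ring set \<Rightarrow> 'a set \<Rightarrow> 'a set" where
  "comm1 X Y = {comm x y | x y. x \<in> X \<and> y \<in> Y}"

definition dot :: "'a::ring set \<Rightarrow> 'a set \<Rightarrow> 'a set" where
  "dot X Y = {x * y | x y. x \<in> X \<and> y \<in> Y}"

definition sigma :: "nat \<Rightarrow> 'a::ab_group_add set \<Rightarrow> 'a set" where
  "sigma n X = {sum_list xs | xs. length xs = n \<and> set xs \<subseteq> X}"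

definition lie_ideal :: "('k::comm_ring_1 \<Rightarrow> 'a::ring \<Rightarrow> 'a) \<Rightarrow> 'a set \<Rightarrow> bool" where
  "lie_ideal s L \<longleftrightarrow> module.subspace s L \<and> set_comm UNIV L \<subseteq> L"

end

theory Submission
  imports Defs
begin

lemma ag_hom:
  assumes "x \<in> add_gen X" and "\<And>x. x \<in> X \<Longrightarrow> f x \<in> add_gen Y"
    and "f 0 = 0" and "\<And>x y. f (x+y) = f x + f y" and "\<And>x. f (-x) = - f x"
  shows "f x \<in> add_gen Y"
  using assms(1)
  by (induction rule: add_gen.induct) (auto simp: assms(2-5) intro: add_gen.intros)

lemma ag_mono:
  assumes "\<And>x. x \<in> X \<Longrightarrow> x \<in> add_gen Y" and "x \<in> add_gen X"
  shows "x \<in> add_gen Y"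
  using ag_hom[where f=id, OF assms(2)] assms(1) by auto

lemma sigma_add:
  assumes "p \<in> sigma i X" "q \<in> sigma j X" shows "p + q \<in> sigma (i+j) X"
proof -
  obtain xs where "p = sum_list xs" "length xs = i" "set xs \<subseteq> X" using assms(1) by (auto simp: sigma_def)
  moreover obtain ys where "q = sum_list ys" "length ys = j" "set ys \<subseteq> X" using assms(2) by (auto simp: sigma_def)
  ultimately show ?thesis unfolding sigma_def
    by (intro CollectI exI[of _ "xs @ ys"]) auto
qed

lemma sigma_eq: "p \<in> sigma i X \<Longrightarrow> i = j \<Longrightarrow> p \<in> sigma j X" by simp

lemma sl_mult_right: "sum_list xs * (z::'a::ring) = sum_list (map (\<lambda>l. l*z) xs)"
  by (induction xs) (auto simp: algebra_simps)

lemma sl_mult_left: "(z::'a::ring) * sum_list xs = sum_list (map (\<lambda>l. z*l) xs)"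
  by (induction xs) (auto simp: algebra_simps)

lemma sigma_mr:
  assumes "p \<in> sigma n L0" "z \<in> L0" shows "p * z \<in> sigma n (dot L0 L0)"
proof -
  obtain xs where "p = sum_list xs" "length xs = n" "set xs \<subseteq> L0" using assms(1) by (auto simp: sigma_def)
  then show ?thesis unfolding sigma_def sl_mult_right dot_def using assms(2)
    by (intro CollectI exI[of _ "map (\<lambda>l. l*z) xs"]) (auto simp: sl_mult_right)
qed

lemma sigma_ml:
  assumes "p \<in> sigma n L0" "z \<in> L0" shows "z * p \<in> sigma n (dot L0 L0)"
proof -
  obtain xs where "p = sum_list xs" "length xs = n" "set xs \<subseteq> L0" using assms(1) by (auto simp: sigma_def)
  then show ?thesis unfolding sigma_def sl_mult_left dot_def using assms(2)
    by (intro CollectI exI[of _ "map (\<lambda>l. z*l) xs"]) (auto simp: sl_mult_left)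
qed

lemma key1: "(a::'a::ring) * comm x (y*z) = comm (a*x) y * z + y * comm (a*x) z + comm (y*z) a * x"
  by (simp add: comm_def algebra_simps)

lemma key2: "(a::'a::ring) * comm x (y*z) * b = (a*b) * comm x (y*z) + a * comm (comm x b) (y*z)
   + a * comm x (y * comm z b) + a * comm x (comm y b * z)"
  by (simp add: comm_def algebra_simps)

lemma key3: "(q::'a::ring) * r * b - b * (q * r) = q * comm r b + comm q b * r"
  by (simp add: comm_def algebra_simps)

lemma comm_swap: "comm (x::'a::ring) b = comm (-b) x"
  by (simp add: comm_def)

theorem lemma3p3:
  fixes s :: "'k::comm_ring_1 \<Rightarrow> 'a::ring \<Rightarrow> 'a" and L :: "'a set"
  assumes "k_algebra s"
    and "lie_ideal s L"
    and "set_comm UNIV (set_prod L L) \<subseteq> L"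
  shows "set_prod (set_prod UNIV (set_comm L (set_prod L L))) UNIV
           \<subseteq> set_prod UNIV (set_comm L (set_prod L L))
       \<and> set_prod UNIV (set_comm L (set_prod L L)) \<subseteq> set_prod L L
       \<and> (\<forall>(L0 :: 'a set) (m :: nat) (n :: nat).
            L0 \<subseteq> L \<and> comm1 UNIV L0 \<subseteq> sigma n L0 \<and> comm1 (dot L0 L0) UNIV \<subseteq> sigma m L0 \<longrightarrow>
              dot UNIV (comm1 L0 (dot L0 L0)) \<subseteq> sigma (2*n+m) (dot L0 L0)
            \<and> dot (dot UNIV (comm1 L0 (dot L0 L0))) UNIV
                \<subseteq> sigma ((2*n+m)*(1+3*n)) (dot L0 L0))"
proof -
  have LL: "comm a x \<in> L" if "x \<in> L" for a x
    using assms(2) that unfolding lie_ideal_def set_comm_def by (blast intro: add_gen.gen)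
  have L2: "comm a (y*z) \<in> L" if "y \<in> L" "z \<in> L" for a y z
    using assms(3) that unfolding set_comm_def set_prod_def by (blast intro: add_gen.gen)
  have P: "y * z \<in> set_prod L L" if "y \<in> L" "z \<in> L" for y z
    using that unfolding set_prod_def by (blast intro: add_gen.gen)
  have C: "comm x u \<in> set_comm L (set_prod L L)" if "x \<in> L" "u \<in> set_prod L L" for x u
    using that unfolding set_comm_def by (blast intro: add_gen.gen)
  have M: "a * c \<in> set_prod UNIV (set_comm L (set_prod L L))" if "c \<in> set_comm L (set_prod L L)" for a c
    using that unfolding set_prod_def by (blast intro: add_gen.gen)
  have part2: "set_prod UNIV (set_comm L (set_prod L L)) \<subseteq> set_prod L L"
  proof
    fix w assume w: "w \<in> set_prod UNIV (set_comm L (set_prod L L))"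
    have g: "a * comm x u \<in> set_prod L L" if "x \<in> L" "u \<in> set_prod L L" for a x u
    proof -
      have "a * comm x u \<in> add_gen {y * z |y z. y \<in> L \<and> z \<in> L}"
      proof (rule ag_hom[where f="\<lambda>u. a * comm x u", OF that(2)[unfolded set_prod_def]])
        fix v assume "v \<in> {y * z |y z. y \<in> L \<and> z \<in> L}"
        then obtain y z where v: "v = y*z" "y \<in> L" "z \<in> L" by blast
        have "comm (a*x) y * z \<in> set_prod L L" using v that LL P by blast
        moreover have "y * comm (a*x) z \<in> set_prod L L" using v that LL P by blast
        moreover have "comm (y*z) a * x \<in> set_prod L L"
          using v that L2[of y z "-a"] P comm_swap[of "y*z" a] by metis
        ultimately show "a * comm x v \<in> add_gen {y * z |y z. y \<in> L \<and> z \<in> L}"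
          unfolding v(1) key1 set_prod_def by (blast intro: add_gen.add)
      qed (auto simp: comm_def algebra_simps)
      then show ?thesis unfolding set_prod_def .
    qed
    show "w \<in> set_prod L L"
      unfolding set_prod_def[of L L]
    proof (rule ag_mono[OF _ w[unfolded set_prod_def[of UNIV]]])
      fix v assume "v \<in> {x * y |x y. x \<in> UNIV \<and> y \<in> set_comm L (set_prod L L)}"
      then obtain a c where v: "v = a * c" "c \<in> set_comm L (set_prod L L)" by blast
      have "(\<lambda>c. a * c) c \<in> add_gen {x * y |x y. x \<in> L \<and> y \<in> L}"
      proof (rule ag_hom[OF v(2)[unfolded set_comm_def]])
        fix t assume "t \<in> {comm x y |x y. x \<in> L \<and> y \<in> set_prod L L}"
        then show "a * t \<in> add_gen {x * y |x y. x \<in> L \<and> y \<in> L}"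
          using g unfolding set_prod_def by blast
      qed (auto simp: algebra_simps)
      then show "v \<in> add_gen {x * y |x y. x \<in> L \<and> y \<in> L}" using v(1) by simp
    qed
  qed
  have part1: "set_prod (set_prod UNIV (set_comm L (set_prod L L))) UNIV
           \<subseteq> set_prod UNIV (set_comm L (set_prod L L))"
  proof
    fix w assume w: "w \<in> set_prod (set_prod UNIV (set_comm L (set_prod L L))) UNIV"
    have g: "a * comm x u * b \<in> set_prod UNIV (set_comm L (set_prod L L))"
      if "x \<in> L" "u \<in> set_prod L L" for a b x u
    proof -
      have "(\<lambda>u. a * comm x u * b) u \<in> add_gen {x * y |x y. x \<in> UNIV \<and> y \<in> set_comm L (set_prod L L)}"
      proof (rule ag_hom[OF that(2)[unfolded set_prod_def]])
        fix v assume "v \<in> {y * z |y z. y \<in> L \<and> z \<in> L}"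
        then obtain y z where v: "v = y*z" "y \<in> L" "z \<in> L" by blast
        have "comm x b \<in> L" using LL[of x "-b"] that comm_swap[of x b] by simp
        have "comm z b \<in> L" using LL[of z "-b"] v comm_swap[of z b] by simp
        have "comm y b \<in> L" using LL[of y "-b"] v comm_swap[of y b] by simp
        have t1: "(a*b) * comm x (y*z) \<in> set_prod UNIV (set_comm L (set_prod L L))"
          by (intro M C P v that)
        have t2: "a * comm (comm x b) (y*z) \<in> set_prod UNIV (set_comm L (set_prod L L))"
          by (intro M C P v \<open>comm x b \<in> L\<close>)
        have t3: "a * comm x (y * comm z b) \<in> set_prod UNIV (set_comm L (set_prod L L))"
          by (intro M C P v that \<open>comm z b \<in> L\<close>)
        have t4: "a * comm x (comm y b * z) \<in> set_prod UNIV (set_comm L (set_prod L L))"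
          by (intro M C P v that \<open>comm y b \<in> L\<close>)
        show "a * comm x v * b \<in> add_gen {x * y |x y. x \<in> UNIV \<and> y \<in> set_comm L (set_prod L L)}"
          using t1 t2 t3 t4 unfolding v(1) key2 set_prod_def by (blast intro: add_gen.add)
      qed (auto simp: comm_def algebra_simps)
      then show ?thesis unfolding set_prod_def by simp
    qed
    have g2: "a * c * b \<in> set_prod UNIV (set_comm L (set_prod L L))"
      if "c \<in> set_comm L (set_prod L L)" for a b c
    proof -
      have "(\<lambda>c. a * c * b) c \<in> add_gen {x * y |x y. x \<in> UNIV \<and> y \<in> set_comm L (set_prod L L)}"
      proof (rule ag_hom[OF that[unfolded set_comm_def]])
        fix t assume "t \<in> {comm x y |x y. x \<in> L \<and> y \<in> set_prod L L}"
        then show "a * t * b \<in> add_gen {x * y |x y. x \<in> UNIV \<and> y \<in> set_comm L (set_prod L L)}"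
          using g unfolding set_prod_def by blast
      qed (auto simp: algebra_simps)
      then show ?thesis unfolding set_prod_def by simp
    qed
    show "w \<in> set_prod UNIV (set_comm L (set_prod L L))"
      unfolding set_prod_def[of UNIV]
    proof (rule ag_mono[OF _ w[unfolded set_prod_def[of "set_prod UNIV (set_comm L (set_prod L L))" UNIV], unfolded set_prod_def[of UNIV]]])
      fix v assume "v \<in> {x * y |x y. x \<in> add_gen {x * y |x y. x \<in> UNIV \<and> y \<in> set_comm L (set_prod L L)} \<and> y \<in> UNIV}"
      then obtain p b where v: "v = p * b" "p \<in> add_gen {x * y |x y. x \<in> UNIV \<and> y \<in> set_comm L (set_prod L L)}" by blast
      have "(\<lambda>p. p * b) p \<in> add_gen {x * y |x y. x \<in> UNIV \<and> y \<in> set_comm L (set_prod L L)}"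
      proof (rule ag_hom[OF v(2)])
        fix t assume "t \<in> {x * y |x y. x \<in> UNIV \<and> y \<in> set_comm L (set_prod L L)}"
        then show "t * b \<in> add_gen {x * y |x y. x \<in> UNIV \<and> y \<in> set_comm L (set_prod L L)}"
          using g2 unfolding set_prod_def by blast
      qed (auto simp: algebra_simps)
      then show "v \<in> add_gen {x * y |x y. x \<in> UNIV \<and> y \<in> set_comm L (set_prod L L)}"
        using v(1) by simp
    qed
  qed
  have part3: "dot UNIV (comm1 L0 (dot L0 L0)) \<subseteq> sigma (2*n+m) (dot L0 L0)
            \<and> dot (dot UNIV (comm1 L0 (dot L0 L0))) UNIV
                \<subseteq> sigma ((2*n+m)*(1+3*n)) (dot L0 L0)"
    if h: "comm1 UNIV L0 \<subseteq> sigma n L0" "comm1 (dot L0 L0) UNIV \<subseteq> sigma m L0" for L0 m n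
  proof -
    have cA: "comm a l \<in> sigma n L0" if "l \<in> L0" for a l
      using h(1) that unfolding comm1_def by blast
    have cB: "comm (y*z) a \<in> sigma m L0" if "y \<in> L0" "z \<in> L0" for a y z
      using h(2) that unfolding comm1_def dot_def by blast
    have k: "a * comm x (y*z) \<in> sigma (2*n+m) (dot L0 L0)" if "x \<in> L0" "y \<in> L0" "z \<in> L0" for a x y z
    proof -
      have "comm (a*x) y * z + y * comm (a*x) z + comm (y*z) a * x \<in> sigma (n+n+m) (dot L0 L0)"
        using that by (intro sigma_add sigma_mr sigma_ml cA cB)
      then show ?thesis unfolding key1 by (rule sigma_eq) simp
    qed
    have first: "dot UNIV (comm1 L0 (dot L0 L0)) \<subseteq> sigma (2*n+m) (dot L0 L0)"
    proof
      fix w assume "w \<in> dot UNIV (comm1 L0 (dot L0 L0))"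
      then obtain a c where w: "w = a * c" "c \<in> comm1 L0 (dot L0 L0)" unfolding dot_def by blast
      then obtain x u where c: "c = comm x u" "x \<in> L0" "u \<in> dot L0 L0" unfolding comm1_def by blast
      then obtain y z where u: "u = y * z" "y \<in> L0" "z \<in> L0" unfolding dot_def by blast
      show "w \<in> sigma (2*n+m) (dot L0 L0)" unfolding w c u using k c u by simp
    qed
    have comlist: "sum_list ps * b - b * sum_list ps \<in> sigma (length ps * (2*n)) (dot L0 L0)"
      if "set ps \<subseteq> dot L0 L0" for ps b
      using that
    proof (induction ps)
      case Nil
      then show ?case by (auto simp: sigma_def)
    next
      case (Cons p ps)
      then obtain q r where qr: "p = q*r" "q \<in> L0" "r \<in> L0" unfolding dot_def by auto
      have "comm r b \<in> sigma n L0" using cA[of r "-b"] qr comm_swap[of r b] by simp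
      moreover have "comm q b \<in> sigma n L0" using cA[of q "-b"] qr comm_swap[of q b] by simp
      ultimately have "q * r * b - b * (q * r) \<in> sigma (n+n) (dot L0 L0)"
        unfolding key3 using qr by (intro sigma_add sigma_mr sigma_ml)
      then have "(q * r * b - b * (q * r)) + (sum_list ps * b - b * sum_list ps)
          \<in> sigma ((n+n) + length ps * (2*n)) (dot L0 L0)"
        using Cons by (intro sigma_add) auto
      then show ?case using qr by (auto simp: algebra_simps elim!: sigma_eq)
    qed
    have pad: "0 \<in> sigma (j*n) (dot L0 L0)" if "x \<in> L0" for j x
    proof (induction j)
      case 0 then show ?case by (auto simp: sigma_def)
    next
      case (Suc j)
      have "x * comm 0 x \<in> sigma n (dot L0 L0)" using cA that by (intro sigma_ml)
      then have "0 \<in> sigma n (dot L0 L0)" by (simp add: comm_def)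
      from sigma_add[OF this Suc] show ?case by simp
    qed
    have second: "dot (dot UNIV (comm1 L0 (dot L0 L0))) UNIV
                \<subseteq> sigma ((2*n+m)*(1+3*n)) (dot L0 L0)"
    proof
      fix w assume "w \<in> dot (dot UNIV (comm1 L0 (dot L0 L0))) UNIV"
      then obtain e b where w0: "w = e * b" "e \<in> dot UNIV (comm1 L0 (dot L0 L0))" unfolding dot_def by blast
      then obtain a c where w1: "e = a * c" "c \<in> comm1 L0 (dot L0 L0)" unfolding dot_def by blast
      then obtain x u where c: "c = comm x u" "x \<in> L0" "u \<in> dot L0 L0" unfolding comm1_def by blast
      then obtain y z where u: "u = y * z" "y \<in> L0" "z \<in> L0" unfolding dot_def by blast
      have w: "w = a * comm x (y*z) * b" "x \<in> L0" "y \<in> L0" "z \<in> L0"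
        using w0 w1 c u by auto
      obtain ps where ps: "a * comm x (y*z) = sum_list ps" "length ps = 2*n+m" "set ps \<subseteq> dot L0 L0"
        using k[OF w(2-4), of a] unfolding sigma_def by blast
      have e: "w = (b*a) * comm x (y*z) + (sum_list ps * b - b * sum_list ps) + 0"
        using w(1) ps(1) by (simp add: algebra_simps)
      have "(b*a) * comm x (y*z) + (sum_list ps * b - b * sum_list ps) + 0
          \<in> sigma ((2*n+m) + (2*n+m)*(2*n) + (2*n+m)*n) (dot L0 L0)"
        using k[OF w(2-4)] comlist[OF ps(3)] pad[OF w(2)] ps(2) by (intro sigma_add) auto
      then show "w \<in> sigma ((2*n+m)*(1+3*n)) (dot L0 L0)"
        unfolding e by (rule sigma_eq) (simp add: algebra_simps)
    qed
    show ?thesis using first second by blast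
  qed
  show ?thesis using part1 part2 part3 by blast
qed

end
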